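(* Suppose a random vector $X$ in $\mathbb{R}^d$ satisfies exponential concentration with constant $\alpha<\infty$. Then for any $V>0$, $p\geq 2$ and finite $T\subset\mathbb{R}^d$, \[ \Big(\mathbb{E}\sum_{t\in T}(|\langle t,X\rangle|\wedge V)^p\Big)^{1/p}\leq 2\,\mathbb{E}\Big(\sum_{t\in T}(|\langle t,X\rangle|\wedge V)^p\Big)^{1/p}+2^{1/p}V^{(p-2)/p}(\alpha\beta(T))^{2/p}, \] where $\beta(T):=\sup_{|x|=1}\big(\sum_{t\in T}|\langle t,x\rangle|^2\big)^{1/2}$.
   Context: $a\wedge b=\min\{a,b\}$; $B_2^d$ is the Euclidean unit ball. A random vector $X$ in $\mathbb{R}^d$ satisfies exponential concentration with constant $\alpha$ if for every Borel set $B\subset\mathbb{R}^d$ with $\mathbb{P}(X\in B)\geq 1/2$ one has $\mathbb{P}(X\in B+\alpha uB_2^d)\geq 1-e^{-u}$ for all $u>0$. *)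

theory Defs
  imports "HOL-Probability.Probability"
begin

text \<open>The enlarged set B + alpha u B_2 is analytic, hence universally
measurable; its probability is taken with respect to the completed law of X.\<close>
definition exp_concentration ::
  "'a measure \<Rightarrow> ('a \<Rightarrow> 'd::euclidean_space) \<Rightarrow> real \<Rightarrow> bool" where
  "exp_concentration M X \<alpha> \<longleftrightarrow>
     (\<forall>B \<in> sets borel. measure M (X -` B \<inter> space M) \<ge> 1/2 \<longrightarrow>
        (\<forall>u>0. measure (completion (distr M borel X))
                 {b + y | b y. b \<in> B \<and> y \<in> cball 0 (\<alpha> * u)} \<ge> 1 - exp (- u)))"

definition beta_T :: "'d::euclidean_space set \<Rightarrow> real" where
  "beta_T T = (SUP x\<in>sphere 0 1. sqrt (\<Sum>t\<in>T. \<bar>t \<bullet> x\<bar>^2))"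

end

theory Submission
  imports Defs
begin


lemma layer_cake_sq:
  fixes M :: "'a measure" and U :: "'a \<Rightarrow> real"
  assumes P: "prob_space M" and [measurable]: "U \<in> borel_measurable M"
    and nn: "\<And>\<omega>. \<omega> \<in> space M \<Longrightarrow> U \<omega> \<ge> 0"
    and tail: "\<And>u. u > 0 \<Longrightarrow> measure M {\<omega>\<in>space M. U \<omega> > u} \<le> exp (-u)"
  shows "(\<integral>\<^sup>+\<omega>. ennreal (U \<omega> ^ 2) \<partial>M) \<le> 2"
proof -
  interpret prob_space M by (rule P)
  interpret pair_sigma_finite M lborel
    unfolding pair_sigma_finite_def using sigma_finite_measure_axioms lborel.sigma_finite_measure_axioms by auto
  define f where "f = (\<lambda>\<omega> (u::real). ennreal (2*u) * (if 0 \<le> u \<and> u < U \<omega> then 1 else 0))"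
  have fm: "case_prod f \<in> borel_measurable (M \<Otimes>\<^sub>M lborel)"
    unfolding f_def by measurable
  have inner: "ennreal (U \<omega> ^ 2) = (\<integral>\<^sup>+u. f \<omega> u \<partial>lborel)" if "\<omega> \<in> space M" for \<omega>
  proof -
    have "(\<integral>\<^sup>+u. f \<omega> u \<partial>lborel) = (\<integral>\<^sup>+u. ennreal (2*u) * indicator {0..U \<omega>} u \<partial>lborel)"
      apply (rule nn_integral_cong_AE)
      using AE_lborel_singleton[of "U \<omega>"] by eventually_elim (auto simp: f_def indicator_def)
    also have "\<dots> = ennreal ((U \<omega>)^2 - 0^2)"
      by (rule nn_integral_FTC_Icc) (auto intro!: derivative_eq_intros simp: nn that)
    finally show ?thesis by simp
  qed
  have "(\<integral>\<^sup>+\<omega>. ennreal (U \<omega> ^ 2) \<partial>M) = (\<integral>\<^sup>+\<omega>. \<integral>\<^sup>+u. f \<omega> u \<partial>lborel \<partial>M)"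
    by (rule nn_integral_cong) (simp add: inner)
  also have "\<dots> = (\<integral>\<^sup>+u. \<integral>\<^sup>+\<omega>. f \<omega> u \<partial>M \<partial>lborel)"
    using Fubini'[OF fm] by simp
  also have "\<dots> \<le> (\<integral>\<^sup>+u. ennreal (2*u*exp(-u)) * indicator {0..} u \<partial>lborel)"
  proof (rule nn_integral_mono)
    fix u :: real
    show "(\<integral>\<^sup>+\<omega>. f \<omega> u \<partial>M) \<le> ennreal (2*u*exp(-u)) * indicator {0..} u"
    proof (cases "u > 0")
      case True
      have "(\<integral>\<^sup>+\<omega>. f \<omega> u \<partial>M) = (\<integral>\<^sup>+\<omega>. ennreal (2*u) * indicator {\<omega>\<in>space M. u < U \<omega>} \<omega> \<partial>M)"
        using True by (intro nn_integral_cong) (auto simp: f_def indicator_def)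
      also have "\<dots> = ennreal (2*u) * emeasure M {\<omega>\<in>space M. u < U \<omega>}"
        by (subst nn_integral_cmult_indicator) auto
      also have "\<dots> = ennreal (2*u) * ennreal (measure M {\<omega>\<in>space M. u < U \<omega>})"
        by (simp add: emeasure_eq_measure)
      also have "\<dots> \<le> ennreal (2*u) * ennreal (exp (-u))"
        using tail[OF True] by (intro mult_left_mono ennreal_leI) auto
      finally show ?thesis using True by (simp add: ennreal_mult'[symmetric] mult.assoc)
    next
      case False
      then have "f \<omega> u = 0" for \<omega> unfolding f_def by auto
      then show ?thesis by simp
    qed
  qed
  also have "\<dots> = ennreal (0 - (- 2 * (1 + 0) * exp (- 0)))"
  proof (rule nn_integral_FTC_atLeast[where F="\<lambda>u. - 2 * (1 + u) * exp (-u)"])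
    show "(\<lambda>u::real. 2*u*exp(-u)) \<in> borel_measurable borel" by measurable
    show "DERIV (\<lambda>u. - 2 * (1 + u) * exp (-u)) x :> 2*x*exp(-x)" for x :: real
      by (rule derivative_eq_intros refl | simp add: algebra_simps)+
    show "0 \<le> x \<Longrightarrow> 0 \<le> 2*x*exp(-x)" for x :: real by simp
    show "((\<lambda>u::real. - 2 * (1 + u) * exp (-u)) \<longlongrightarrow> 0) at_top" by real_asymp
  qed
  finally show ?thesis by simp
qed


lemma powr_pm1: fixes x q :: real assumes "x > 0" shows "x powr (q - 1) * x = x powr q"
proof -
  have "x powr q = x powr ((q - 1) + 1)" by simp
  also have "\<dots> = x powr (q - 1) * x powr 1" by (rule powr_add)
  finally show ?thesis using assms by simp
qed
lemma powr_1m: fixes x q :: real assumes "x > 0" shows "x powr q * x powr (1 - q) = x"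
proof -
  have "x powr q * x powr (1 - q) = x powr (q + (1 - q))" by (rule powr_add[symmetric])
  then show ?thesis using assms by simp
qed
lemma powr_1m_inv: fixes x q :: real assumes "x > 0" shows "x powr (1 - q) = 1 / x powr (q - 1)"
proof -
  have "x powr (1 - q) = x powr (- (q - 1))" by simp
  also have "\<dots> = 1 / x powr (q - 1)" by (rule powr_minus_divide)
  finally show ?thesis .
qed

lemma eps_powr_le:
  fixes x y p :: real
  assumes "y \<ge> 0" "p > 0" and h: "\<And>e. e > 0 \<Longrightarrow> x \<le> (y + e) powr p"
  shows "x \<le> y powr p"
proof (rule ccontr)
  assume "\<not> x \<le> y powr p"
  then have xg: "x > y powr p" by simp
  have "y powr p \<ge> 0" by simp
  then have x0: "x > 0" using xg by linarith
  have xx: "(x powr (1/p)) powr p = x" using x0 assms by (simp add: powr_powr)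
  have yl: "y < x powr (1/p)"
  proof (rule ccontr)
    assume "\<not> y < x powr (1/p)"
    then have "x powr (1/p) \<le> y" by simp
    then have "(x powr (1/p)) powr p \<le> y powr p" using assms by (intro powr_mono2) auto
    then show False using xx xg by simp
  qed
  define e where "e = (x powr (1/p) - y) / 2"
  have e0: "e > 0" using yl unfolding e_def by simp
  have ye: "y + e < x powr (1/p)" unfolding e_def using yl by (simp add: field_simps)
  have "(y + e) powr p < (x powr (1/p)) powr p"
    using assms ye e0 by (intro powr_less_mono2) auto
  also have "\<dots> = x" using xx .
  finally show False using h[OF e0] by simp
qed

lemma alg1: fixes A K P Q a :: real
  shows "A>0 \<Longrightarrow> K>0 \<Longrightarrow> P>0 \<Longrightarrow> Q > 0 \<Longrightarrow> A/K * (a * (Q*K) / (P*A)) = Q * (a * (1/P))"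
  by (simp add: field_simps)
lemma pt_convex:
  fixes p a b A w :: real
  assumes p: "p \<ge> 1" and a: "a \<ge> 0" and b: "b \<ge> 0" and A: "A > 0" and w: "w > 0"
  shows "(a + b) powr p \<le> (A + w) powr (p - 1) * (a powr p * A powr (1 - p) + b powr p * w powr (1 - p))"
proof -
  define K where "K = A + w"
  have K: "K > 0" using A w by (simp add: K_def)
  have Kp: "K powr p = K powr (p - 1) * K" using powr_pm1[OF K] by simp
  have Ap: "A powr p = A powr (p - 1) * A" using powr_pm1[OF A] by simp
  have wp: "w powr p = w powr (p - 1) * w" using powr_pm1[OF w] by simp
  have Ai: "A powr (1 - p) = 1 / A powr (p - 1)" by (rule powr_1m_inv[OF A])
  have wi: "w powr (1 - p) = 1 / w powr (p - 1)" by (rule powr_1m_inv[OF w])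
  have Kpos: "K powr (p - 1) > 0" "A powr (p - 1) > 0" "w powr (p - 1) > 0" using K A w by auto
  consider "a = 0" | "b = 0" | "a > 0 \<and> b > 0" using a b by linarith
  then show ?thesis
  proof cases
    case 1
    have "w powr (p - 1) \<le> K powr (p - 1)" using A w p by (intro powr_mono2) (auto simp: K_def)
    then have "1 \<le> K powr (p - 1) * w powr (1 - p)"
      using Kpos by (simp add: wi)
    then have "b powr p * 1 \<le> b powr p * (K powr (p - 1) * w powr (1 - p))"
      by (intro mult_left_mono) auto
    then show ?thesis using 1 p by (simp add: algebra_simps K_def)
  next
    case 2
    have "A powr (p - 1) \<le> K powr (p - 1)" using A w p by (intro powr_mono2) (auto simp: K_def)
    then have "1 \<le> K powr (p - 1) * A powr (1 - p)"
      using Kpos by (simp add: Ai)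
    then have "a powr p * 1 \<le> a powr p * (K powr (p - 1) * A powr (1 - p))"
      by (intro mult_left_mono) auto
    then show ?thesis using 2 p by (simp add: algebra_simps K_def)
  next
    case 3
    define t where "t = w / K"
    define x where "x = a * K / A"
    define y where "y = b * K / w"
    have t: "0 \<le> t" "t \<le> 1" using A w by (auto simp: t_def K_def)
    have xy: "x \<in> {0<..}" "y \<in> {0<..}" using 3 A w K by (auto simp: x_def y_def)
    have sum1: "A / K + w / K = 1" using K by (simp add: K_def add_divide_distrib[symmetric])
    have 1: "1 - t = A / K" using sum1 by (simp add: t_def)
    have eq: "(1 - t) *\<^sub>R x + t *\<^sub>R y = a + b"
      unfolding 1 using A w K by (simp add: t_def x_def y_def)
    have "(a + b) powr p \<le> (1 - t) * x powr p + t * y powr p"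
      using convex_onD[OF powr_convex[OF p] t xy] eq by simp
    also have "(1 - t) * x powr p = K powr (p - 1) * (a powr p * A powr (1 - p))"
    proof -
      have 2: "x powr p = a powr p * K powr p / A powr p"
        using 3 A K by (simp add: x_def powr_divide powr_mult)
      show ?thesis unfolding 1 2 Kp Ap Ai using alg1[OF A K Kpos(2) Kpos(1), of "a powr p"] by simp
    qed
    also have "t * y powr p = K powr (p - 1) * (b powr p * w powr (1 - p))"
    proof -
      have 2: "y powr p = b powr p * K powr p / w powr p"
        using 3 w K by (simp add: y_def powr_divide powr_mult)
      show ?thesis unfolding t_def 2 Kp wp wi using alg1[OF w K Kpos(3) Kpos(1), of "b powr p"] by simp
    qed
    finally show ?thesis by (simp add: algebra_simps K_def)
  qed
qed

lemma mink_core: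
  fixes p A w Sa Sb Sab :: real
  assumes "p \<ge> 1" "A > 0" "w > 0" "Sa \<le> A powr p" "Sb \<le> w powr p"
    and "Sab \<le> (A + w) powr (p - 1) * (Sa * A powr (1 - p) + Sb * w powr (1 - p))"
  shows "Sab \<le> (A + w) powr p"
proof -
  have "Sa * A powr (1 - p) \<le> A powr p * A powr (1 - p)" using assms by (intro mult_right_mono) auto
  also have "\<dots> = A" using assms by (simp add: powr_add[symmetric])
  finally have 1: "Sa * A powr (1 - p) \<le> A" .
  have "Sb * w powr (1 - p) \<le> w powr p * w powr (1 - p)" using assms by (intro mult_right_mono) auto
  also have "\<dots> = w" using assms by (simp add: powr_add[symmetric])
  finally have 2: "Sb * w powr (1 - p) \<le> w" .
  have "(A + w) powr (p - 1) * (Sa * A powr (1 - p) + Sb * w powr (1 - p)) \<le> (A + w) powr (p - 1) * (A + w)"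
    using 1 2 by (intro mult_left_mono) auto
  then have "Sab \<le> (A + w) powr (p - 1) * (A + w)"
    using assms(6) by linarith
  also have "\<dots> = (A + w) powr p" using assms powr_pm1[of "A + w" p] by simp
  finally show ?thesis .
qed


lemma mink_sum:
  fixes a b :: "'t \<Rightarrow> real" and p :: real
  assumes T: "finite T" and p: "p \<ge> 1" and a: "\<And>t. a t \<ge> 0" and b: "\<And>t. b t \<ge> 0"
  shows "(\<Sum>t\<in>T. (a t + b t) powr p)
     \<le> ((\<Sum>t\<in>T. a t powr p) powr (1/p) + (\<Sum>t\<in>T. b t powr p) powr (1/p)) powr p"
proof -
  define Sa where "Sa = (\<Sum>t\<in>T. a t powr p)"
  define Sb where "Sb = (\<Sum>t\<in>T. b t powr p)"
  define A0 where "A0 = Sa powr (1/p)"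
  define W0 where "W0 = Sb powr (1/p)"
  have Sa0: "Sa \<ge> 0" unfolding Sa_def by (intro sum_nonneg) auto
  have Sb0: "Sb \<ge> 0" unfolding Sb_def by (intro sum_nonneg) auto
  have SaA: "Sa = A0 powr p" unfolding A0_def using Sa0 p by (simp add: powr_powr)
  have SbW: "Sb = W0 powr p" unfolding W0_def using Sb0 p by (simp add: powr_powr)
  have A00: "A0 \<ge> 0" "W0 \<ge> 0" by (auto simp: A0_def W0_def)
  show ?thesis unfolding Sa_def[symmetric] Sb_def[symmetric] A0_def[symmetric] W0_def[symmetric]
  proof (rule eps_powr_le)
    show "A0 + W0 \<ge> 0" "p > 0" using A00 p by auto
    fix e :: real assume e: "e > 0"
    define A where "A = A0 + e/2"
    define w where "w = W0 + e/2"
    have A: "A > 0" and w: "w > 0" using e A00 by (auto simp: A_def w_def)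
    have "(\<Sum>t\<in>T. (a t + b t) powr p) \<le> (\<Sum>t\<in>T. (A + w) powr (p - 1) * (a t powr p * A powr (1 - p) + b t powr p * w powr (1 - p)))"
      by (intro sum_mono pt_convex p a b A w)
    also have "\<dots> = (A + w) powr (p - 1) * (Sa * A powr (1 - p) + Sb * w powr (1 - p))"
      by (simp add: Sa_def Sb_def sum_distrib_left sum_distrib_right sum.distrib algebra_simps)
    finally have 1: "(\<Sum>t\<in>T. (a t + b t) powr p) \<le> \<dots>" .
    have "(\<Sum>t\<in>T. (a t + b t) powr p) \<le> (A + w) powr p"
    proof (rule mink_core[OF p A w _ _ 1])
      show "Sa \<le> A powr p" unfolding SaA using A00 e p by (intro powr_mono2) (auto simp: A_def)
      show "Sb \<le> w powr p" unfolding SbW using A00 e p by (intro powr_mono2) (auto simp: w_def)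
    qed
    then show "(\<Sum>t\<in>T. (a t + b t) powr p) \<le> (A0 + W0 + e) powr p"
      by (simp add: A_def w_def algebra_simps)
  qed
qed

lemma mink_exp:
  fixes M :: "'a measure" and W :: "'a \<Rightarrow> real"
  assumes P: "prob_space M" and p: "p \<ge> 1" and A00: "A0 \<ge> 0" and w00: "w0 \<ge> 0"
    and W0: "\<And>\<omega>. \<omega> \<in> space M \<Longrightarrow> W \<omega> \<ge> 0"
    and i1: "integrable M (\<lambda>\<omega>. W \<omega> powr p)"
    and i2: "integrable M (\<lambda>\<omega>. (A0 + W \<omega>) powr p)"
    and EW: "(\<integral>\<omega>. W \<omega> powr p \<partial>M) \<le> w0 powr p"
  shows "(\<integral>\<omega>. (A0 + W \<omega>) powr p \<partial>M) \<le> (A0 + w0) powr p"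
proof (rule eps_powr_le)
  interpret prob_space M by (rule P)
  show "A0 + w0 \<ge> 0" "p > 0" using A00 w00 p by auto
  fix e :: real assume e: "e > 0"
  define A where "A = A0 + e/2"
  define w where "w = w0 + e/2"
  have A: "A > 0" and w: "w > 0" using e A00 w00 by (auto simp: A_def w_def)
  have "(\<integral>\<omega>. (A0 + W \<omega>) powr p \<partial>M) \<le> (\<integral>\<omega>. (A + w) powr (p - 1) * (A0 powr p * A powr (1 - p) + W \<omega> powr p * w powr (1 - p)) \<partial>M)"
    using i1 i2 by (intro integral_mono pt_convex p A00 W0 A w) auto
  also have "\<dots> = (A + w) powr (p - 1) * (A0 powr p * A powr (1 - p) + (\<integral>\<omega>. W \<omega> powr p \<partial>M) * w powr (1 - p))"
    using i1 by (simp add: prob_space)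
  finally have 1: "(\<integral>\<omega>. (A0 + W \<omega>) powr p \<partial>M) \<le> \<dots>" .
  have "(\<integral>\<omega>. (A0 + W \<omega>) powr p \<partial>M) \<le> (A + w) powr p"
  proof (rule mink_core[OF p A w _ _ 1])
    show "A0 powr p \<le> A powr p" using A00 e p by (intro powr_mono2) (auto simp: A_def)
    have "w0 powr p \<le> w powr p" using w00 e p by (intro powr_mono2) (auto simp: w_def)
    then show "(\<integral>\<omega>. W \<omega> powr p \<partial>M) \<le> w powr p" using EW by linarith
  qed
  then show "(\<integral>\<omega>. (A0 + W \<omega>) powr p \<partial>M) \<le> (A0 + w0 + e) powr p"
    by (simp add: A_def w_def algebra_simps)
qed


lemma beta_bdd:
  fixes T :: "'d::euclidean_space set"
  assumes "finite T"
  shows "bdd_above ((\<lambda>x. sqrt (\<Sum>t\<in>T. \<bar>t \<bullet> x\<bar>^2)) ` sphere 0 1)"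
proof (rule bdd_aboveI2)
  fix x :: 'd assume x: "x \<in> sphere 0 1"
  have "(\<Sum>t\<in>T. \<bar>t \<bullet> x\<bar>^2) \<le> (\<Sum>t\<in>T. (norm t)^2)"
  proof (rule sum_mono)
    fix t
    have "\<bar>t \<bullet> x\<bar> \<le> norm t * norm x" by (rule Cauchy_Schwarz_ineq2)
    then have "\<bar>t \<bullet> x\<bar> \<le> norm t" using x by simp
    then show "\<bar>t \<bullet> x\<bar>^2 \<le> (norm t)^2" by (intro power_mono) auto
  qed
  then show "sqrt (\<Sum>t\<in>T. \<bar>t \<bullet> x\<bar>^2) \<le> sqrt (\<Sum>t\<in>T. (norm t)^2)" by simp
qed

lemma beta_nonneg:
  fixes T :: "'d::euclidean_space set"
  assumes "finite T"
  shows "beta_T T \<ge> 0"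
proof -
  obtain i :: 'd where i: "i \<in> Basis" using nonempty_Basis by blast
  then have "i \<in> sphere 0 1" by simp
  then have "sqrt (\<Sum>t\<in>T. \<bar>t \<bullet> i\<bar>^2) \<le> beta_T T"
    unfolding beta_T_def by (intro cSUP_upper beta_bdd assms)
  moreover have "sqrt (\<Sum>t\<in>T. \<bar>t \<bullet> i\<bar>^2) \<ge> 0" by (intro real_sqrt_ge_zero sum_nonneg) auto
  ultimately show ?thesis by linarith
qed

lemma beta_bound:
  fixes T :: "'d::euclidean_space set"
  assumes "finite T"
  shows "(\<Sum>t\<in>T. \<bar>t \<bullet> y\<bar>^2) \<le> (beta_T T * norm y)^2"
proof (cases "y = 0")
  case True then show ?thesis by simp
next
  case False
  define x where "x = (1 / norm y) *\<^sub>R y"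
  have x: "x \<in> sphere 0 1" using False by (simp add: x_def)
  have "sqrt (\<Sum>t\<in>T. \<bar>t \<bullet> x\<bar>^2) \<le> beta_T T"
    unfolding beta_T_def using x by (intro cSUP_upper beta_bdd assms)
  moreover have "(\<Sum>t\<in>T. \<bar>t \<bullet> x\<bar>^2) \<ge> 0" by (intro sum_nonneg) auto
  ultimately have "(sqrt (\<Sum>t\<in>T. \<bar>t \<bullet> x\<bar>^2))^2 \<le> (beta_T T)^2"
    by (intro power_mono) auto
  then have 1: "(\<Sum>t\<in>T. \<bar>t \<bullet> x\<bar>^2) \<le> (beta_T T)^2"
    using \<open>(\<Sum>t\<in>T. \<bar>t \<bullet> x\<bar>^2) \<ge> 0\<close> by simp
  have yx: "y = norm y *\<^sub>R x" using False by (simp add: x_def)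
  have "(\<Sum>t\<in>T. \<bar>t \<bullet> y\<bar>^2) = (norm y)^2 * (\<Sum>t\<in>T. \<bar>t \<bullet> x\<bar>^2)"
    by (subst yx) (simp add: sum_distrib_left power_mult_distrib abs_mult)
  also have "\<dots> \<le> (norm y)^2 * (beta_T T)^2" using 1 by (intro mult_left_mono) auto
  finally show ?thesis by (simp add: power_mult_distrib mult.commute)
qed

lemma min_sub: fixes u v V :: real assumes "u \<ge> 0" "v \<ge> 0" "V > 0"
  shows "min (u + v) V \<le> min u V + min v V"
  using assms by (auto simp: min_def)

lemma lip_F:
  fixes T :: "'d::euclidean_space set" and p V :: real
  assumes T: "finite T" and p: "p \<ge> 2" and V: "V > 0"
  shows "(\<Sum>t\<in>T. (min \<bar>t \<bullet> (b + y)\<bar> V) powr p) powr (1/p)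
     \<le> (\<Sum>t\<in>T. (min \<bar>t \<bullet> b\<bar> V) powr p) powr (1/p)
        + (V powr (p - 2) * (beta_T T * norm y)^2) powr (1/p)"
proof -
  define a where "a = (\<lambda>t. min \<bar>t \<bullet> b\<bar> V)"
  define d where "d = (\<lambda>t. min \<bar>t \<bullet> y\<bar> V)"
  have a0: "\<And>t. a t \<ge> 0" and d0: "\<And>t. d t \<ge> 0" using V by (auto simp: a_def d_def)
  have 1: "min \<bar>t \<bullet> (b + y)\<bar> V \<le> a t + d t" for t
  proof -
    have "\<bar>t \<bullet> (b + y)\<bar> \<le> \<bar>t \<bullet> b\<bar> + \<bar>t \<bullet> y\<bar>" by (simp add: inner_add_right abs_triangle_ineq)
    then have "min \<bar>t \<bullet> (b + y)\<bar> V \<le> min (\<bar>t \<bullet> b\<bar> + \<bar>t \<bullet> y\<bar>) V" by (simp add: min_def)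
    also have "\<dots> \<le> a t + d t" unfolding a_def d_def by (rule min_sub) (use V in auto)
    finally show ?thesis .
  qed
  have "(\<Sum>t\<in>T. (min \<bar>t \<bullet> (b + y)\<bar> V) powr p) \<le> (\<Sum>t\<in>T. (a t + d t) powr p)"
    by (intro sum_mono powr_mono2 1) (use p V in auto)
  also have "\<dots> \<le> ((\<Sum>t\<in>T. a t powr p) powr (1/p) + (\<Sum>t\<in>T. d t powr p) powr (1/p)) powr p"
    by (rule mink_sum[OF T _ a0 d0]) (use p in auto)
  finally have 2: "(\<Sum>t\<in>T. (min \<bar>t \<bullet> (b + y)\<bar> V) powr p) \<le> \<dots>" .
  have 3: "(\<Sum>t\<in>T. (min \<bar>t \<bullet> (b + y)\<bar> V) powr p) powr (1/p)
      \<le> (\<Sum>t\<in>T. a t powr p) powr (1/p) + (\<Sum>t\<in>T. d t powr p) powr (1/p)"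
  proof -
    have "(\<Sum>t\<in>T. (min \<bar>t \<bullet> (b + y)\<bar> V) powr p) powr (1/p)
        \<le> (((\<Sum>t\<in>T. a t powr p) powr (1/p) + (\<Sum>t\<in>T. d t powr p) powr (1/p)) powr p) powr (1/p)"
      by (intro powr_mono2 2 sum_nonneg) (use p in auto)
    also have "\<dots> = (\<Sum>t\<in>T. a t powr p) powr (1/p) + (\<Sum>t\<in>T. d t powr p) powr (1/p)"
      using p by (simp add: powr_powr)
    finally show ?thesis .
  qed
  have 4: "d t powr p \<le> V powr (p - 2) * \<bar>t \<bullet> y\<bar>^2" for t
  proof (cases "d t = 0")
    case True then show ?thesis using p by simp
  next
    case False
    then have dp: "d t > 0" using d0[of t] by linarith
    have "d t powr p = d t powr ((p - 2) + 2)" by simp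
    also have "\<dots> = d t powr (p - 2) * d t powr 2" by (rule powr_add)
    also have "\<dots> = d t powr (p - 2) * (d t)^2" using dp by simp
    also have "\<dots> \<le> V powr (p - 2) * \<bar>t \<bullet> y\<bar>^2"
    proof (intro mult_mono)
      show "d t powr (p - 2) \<le> V powr (p - 2)" using p dp by (intro powr_mono2) (auto simp: d_def)
      show "(d t)^2 \<le> \<bar>t \<bullet> y\<bar>^2" using dp by (intro power_mono) (auto simp: d_def)
    qed auto
    finally show ?thesis .
  qed
  have "(\<Sum>t\<in>T. d t powr p) \<le> (\<Sum>t\<in>T. V powr (p - 2) * \<bar>t \<bullet> y\<bar>^2)"
    by (intro sum_mono 4)
  also have "\<dots> = V powr (p - 2) * (\<Sum>t\<in>T. \<bar>t \<bullet> y\<bar>^2)" by (simp add: sum_distrib_left)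
  also have "\<dots> \<le> V powr (p - 2) * (beta_T T * norm y)^2"
    by (intro mult_left_mono beta_bound T) auto
  finally have 5: "(\<Sum>t\<in>T. d t powr p) powr (1/p) \<le> (V powr (p - 2) * (beta_T T * norm y)^2) powr (1/p)"
    by (intro powr_mono2 sum_nonneg) (use p in auto)
  show ?thesis using 3 5 unfolding a_def by linarith
qed


lemma powr_inv_less:
  fixes W y p :: real assumes "W \<ge> 0" "y \<ge> 0" "p > 0"
  shows "y powr (1/p) < W \<longleftrightarrow> y < W powr p"
proof
  assume h: "y powr (1/p) < W"
  have "(y powr (1/p)) powr p < W powr p" using h assms by (intro powr_less_mono2) auto
  then show "y < W powr p" using assms by (simp add: powr_powr)
next
  assume h: "y < W powr p"
  have "y powr (1/p) < (W powr p) powr (1/p)" using h assms by (intro powr_less_mono2) auto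
  then show "y powr (1/p) < W" using assms by (simp add: powr_powr)
qed

lemma tail_moment:
  fixes M :: "'a measure" and W :: "'a \<Rightarrow> real"
  assumes P: "prob_space M" and Wm[measurable]: "W \<in> borel_measurable M"
    and W0: "\<And>\<omega>. \<omega> \<in> space M \<Longrightarrow> W \<omega> \<ge> 0"
    and Wb: "\<And>\<omega>. \<omega> \<in> space M \<Longrightarrow> W \<omega> \<le> Bd"
    and c: "c > 0" and p: "p > 0"
    and tail: "\<And>u. u > 0 \<Longrightarrow> measure M {\<omega>\<in>space M. W \<omega> > (c * u^2) powr (1/p)} \<le> exp (-u)"
  shows "(\<integral>\<omega>. W \<omega> powr p \<partial>M) \<le> 2 * c"
proof -
  interpret prob_space M by (rule P)
  define U where "U = (\<lambda>\<omega>. sqrt (W \<omega> powr p / c))"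
  have Um[measurable]: "U \<in> borel_measurable M" unfolding U_def by measurable
  have Wpc: "W \<omega> powr p / c \<ge> 0" for \<omega> using c by (intro divide_nonneg_pos) auto
  have U2: "U \<omega> ^ 2 = W \<omega> powr p / c" for \<omega>
    using Wpc[of \<omega>] unfolding U_def by simp
  have "(\<integral>\<^sup>+\<omega>. ennreal (U \<omega> ^ 2) \<partial>M) \<le> 2"
  proof (rule layer_cake_sq[OF P Um])
    show "\<omega> \<in> space M \<Longrightarrow> 0 \<le> U \<omega>" for \<omega> using Wpc[of \<omega>] by (simp add: U_def)
    fix u :: real assume u: "u > 0"
    have "{\<omega>\<in>space M. U \<omega> > u} = {\<omega>\<in>space M. W \<omega> > (c * u^2) powr (1/p)}"
    proof (intro Collect_cong conj_cong refl)
      fix \<omega> assume \<omega>: "\<omega> \<in> space M"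
      have "U \<omega> > u \<longleftrightarrow> sqrt (u^2) < sqrt (W \<omega> powr p / c)" using u by (simp add: U_def)
      also have "\<dots> \<longleftrightarrow> u^2 < W \<omega> powr p / c" by (rule real_sqrt_less_iff)
      also have "\<dots> \<longleftrightarrow> c * u^2 < W \<omega> powr p" using c by (simp add: field_simps)
      also have "\<dots> \<longleftrightarrow> (c * u^2) powr (1/p) < W \<omega>"
        using powr_inv_less[of "W \<omega>" "c * u^2" p] W0[OF \<omega>] c p by simp
      finally show "U \<omega> > u \<longleftrightarrow> W \<omega> > (c * u^2) powr (1/p)" .
    qed
    then show "measure M {\<omega>\<in>space M. U \<omega> > u} \<le> exp (-u)" using tail[OF u] by simp
  qed
  moreover have int: "integrable M (\<lambda>\<omega>. U \<omega> ^ 2)"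
  proof (rule integrable_const_bound[where B="Bd powr p / c"])
    show "AE \<omega> in M. norm (U \<omega> ^ 2) \<le> Bd powr p / c"
    proof (rule AE_I2)
      fix \<omega> assume \<omega>: "\<omega> \<in> space M"
      have "W \<omega> powr p \<le> Bd powr p" using W0[OF \<omega>] Wb[OF \<omega>] p by (intro powr_mono2) auto
      then show "norm (U \<omega> ^ 2) \<le> Bd powr p / c" unfolding U2 using c by (simp add: divide_right_mono)
    qed
  qed measurable
  ultimately have "ennreal (\<integral>\<omega>. U \<omega> ^ 2 \<partial>M) \<le> 2"
    by (subst (asm) nn_integral_eq_integral) auto
  then have "(\<integral>\<omega>. U \<omega> ^ 2 \<partial>M) \<le> 2"
    by (metis ennreal_le_iff ennreal_numeral zero_le_numeral)
  then have "(\<integral>\<omega>. W \<omega> powr p \<partial>M) / c \<le> 2" unfolding U2 by simp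
  then show ?thesis using c by (simp add: field_simps)
qed


theorem proposition3p1:
  fixes M :: "'a measure" and X :: "'a \<Rightarrow> 'd::euclidean_space"
    and \<alpha> V p :: real and T :: "'d set"
  assumes "prob_space M"
    and "X \<in> borel_measurable M"
    and "exp_concentration M X \<alpha>"
    and "V > 0" and "p \<ge> 2" and "finite T"
  shows "(prob_space.expectation M
            (\<lambda>\<omega>. \<Sum>t\<in>T. (min \<bar>t \<bullet> X \<omega>\<bar> V) powr p)) powr (1/p)
         \<le> 2 * prob_space.expectation M
                 (\<lambda>\<omega>. (\<Sum>t\<in>T. (min \<bar>t \<bullet> X \<omega>\<bar> V) powr p) powr (1/p))
           + 2 powr (1/p) * V powr ((p - 2) / p) * (\<alpha> * beta_T T) powr (2/p)"
proof -
  interpret prob_space M by fact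
  note Xm[measurable] = assms(2)
  note conc = assms(3)[unfolded exp_concentration_def]
  have V: "V > 0" and p: "p \<ge> 2" and T: "finite T" by fact+
  have p0: "p > 0" "p \<ge> 1" using p by auto
  define G where "G = (\<lambda>x::'d. \<Sum>t\<in>T. (min \<bar>t \<bullet> x\<bar> V) powr p)"
  define F where "F = (\<lambda>x. G x powr (1/p))"
  have Gm[measurable]: "G \<in> borel_measurable borel" unfolding G_def by measurable
  have Fm[measurable]: "F \<in> borel_measurable borel" unfolding F_def by measurable
  have G0: "G x \<ge> 0" for x unfolding G_def by (intro sum_nonneg) auto
  have Gb: "G x \<le> real (card T) * V powr p" for x
    unfolding G_def
  proof (rule sum_bounded_above)
    fix t show "min \<bar>t \<bullet> x\<bar> V powr p \<le> V powr p" using V p0 by (intro powr_mono2) auto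
  qed
  define Smax where "Smax = (real (card T) * V powr p) powr (1/p)"
  have F0: "F x \<ge> 0" for x by (simp add: F_def)
  have Fb: "F x \<le> Smax" for x unfolding F_def Smax_def using Gb[of x] G0[of x] p0
    by (intro powr_mono2) auto
  have FG: "F x powr p = G x" for x unfolding F_def using G0[of x] p0 by (simp add: powr_powr)
  define E0 where "E0 = expectation (\<lambda>\<omega>. F (X \<omega>))"
  have intF: "integrable M (\<lambda>\<omega>. F (X \<omega>))"
    by (rule integrable_const_bound[where B=Smax]) (auto simp: F0 Fb)
  have E00: "E0 \<ge> 0" unfolding E0_def by (intro integral_nonneg_AE) (auto simp: F0)
  define \<beta> where "\<beta> = beta_T T"
  have \<beta>0: "\<beta> \<ge> 0" unfolding \<beta>_def by (rule beta_nonneg[OF T])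
  have \<alpha>0: "\<alpha> \<ge> 0"
  proof (rule ccontr)
    assume "\<not> \<alpha> \<ge> 0"
    then have "cball (0::'d) (\<alpha> * 1) = {}" by simp
    then have e: "{b + y | b y. b \<in> (UNIV::'d set) \<and> y \<in> cball 0 (\<alpha> * 1)} = {}" by simp
    have u1: "measure M (X -` UNIV \<inter> space M) \<ge> 1/2" by (simp add: prob_space)
    have U: "UNIV \<in> sets (borel::'d measure)" by simp
    have h: "\<forall>u>0. measure (completion (distr M borel X)) {b + y | b y. b \<in> (UNIV::'d set) \<and> y \<in> cball 0 (\<alpha> * u)} \<ge> 1 - exp (- u)"
      using conc U u1 by blast
    have "measure (completion (distr M borel X)) {b + y | b y. b \<in> (UNIV::'d set) \<and> y \<in> cball 0 (\<alpha> * 1)} \<ge> 1 - exp (- 1)"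
      by (rule h[rule_format]) simp
    then show False using e by simp
  qed
  define c where "c = V powr (p - 2) * (\<alpha> * \<beta>)^2"
  have c0: "c \<ge> 0" unfolding c_def by simp
  define w0 where "w0 = (2 * c) powr (1/p)"
  have w00: "w0 \<ge> 0" unfolding w0_def by simp
  have key: "expectation (\<lambda>\<omega>. G (X \<omega>)) \<le> (2 * E0 + w0 + \<delta>) powr p" if \<delta>: "\<delta> > 0" for \<delta>
  proof -
    define A0 where "A0 = 2 * E0 + \<delta>"
    have A0: "A0 > 0" using E00 \<delta> by (simp add: A0_def)
    define W where "W = (\<lambda>\<omega>. max 0 (F (X \<omega>) - A0))"
    have Wm[measurable]: "W \<in> borel_measurable M" unfolding W_def by measurable
    have W0: "W \<omega> \<ge> 0" for \<omega> by (simp add: W_def)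
    have Wb: "W \<omega> \<le> Smax" for \<omega> using Fb[of "X \<omega>"] A0 F0[of "X \<omega>"] by (auto simp: W_def)
    have SW: "F (X \<omega>) \<le> A0 + W \<omega>" for \<omega> by (simp add: W_def)
    define r where "r = (\<lambda>u. (c * u^2) powr (1/p))"
    have r0: "r u \<ge> 0" for u by (simp add: r_def)
    have tail: "prob {\<omega>\<in>space M. W \<omega> > r u} \<le> exp (-u)" if u: "u > 0" for u
    proof -
      have mk: "prob {\<omega>\<in>space M. F (X \<omega>) \<ge> A0} \<le> E0 / A0"
        unfolding E0_def by (rule integral_Markov_inequality_measure[OF intF, of "space M"]) (auto simp: F0 A0)
      have "E0 / A0 \<le> 1/2" using A0 E00 \<delta> by (simp add: A0_def field_simps)
      define Bs where "Bs = {x::'d. F x < A0}"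
      have Bs: "Bs \<in> sets borel" unfolding Bs_def by measurable
      have pre: "X -` Bs \<inter> space M = space M - {\<omega>\<in>space M. F (X \<omega>) \<ge> A0}" by (auto simp: Bs_def)
      have "measure M (X -` Bs \<inter> space M) = 1 - prob {\<omega>\<in>space M. F (X \<omega>) \<ge> A0}"
        unfolding pre by (rule prob_compl) measurable
      then have half: "measure M (X -` Bs \<inter> space M) \<ge> 1/2"
        using mk \<open>E0 / A0 \<le> 1/2\<close> by linarith
      define Bu where "Bu = {b + y | b y. b \<in> Bs \<and> y \<in> cball 0 (\<alpha> * u)}"
      have conc_u: "measure (completion (distr M borel X)) Bu \<ge> 1 - exp (-u)"
        unfolding Bu_def using conc Bs half u by blast
      define Cs where "Cs = {x::'d. F x < A0 + r u}"
      have Cs: "Cs \<in> sets borel" unfolding Cs_def by measurable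
      have sub: "Bu \<subseteq> Cs"
      proof
        fix x assume "x \<in> Bu"
        then obtain b y where x: "x = b + y" and b: "F b < A0" and y: "norm y \<le> \<alpha> * u"
          by (auto simp: Bu_def Bs_def)
        have "F (b + y) \<le> F b + (V powr (p - 2) * (\<beta> * norm y)^2) powr (1/p)"
          unfolding F_def G_def \<beta>_def by (rule lip_F[OF T p V])
        also have "(V powr (p - 2) * (\<beta> * norm y)^2) powr (1/p) \<le> r u"
        proof -
          have "\<beta> * norm y \<le> \<beta> * (\<alpha> * u)" using y \<beta>0 by (intro mult_left_mono) auto
          then have "(\<beta> * norm y)^2 \<le> (\<beta> * (\<alpha> * u))^2" using \<beta>0 by (intro power_mono) auto
          then have "V powr (p - 2) * (\<beta> * norm y)^2 \<le> V powr (p - 2) * (\<beta> * (\<alpha> * u))^2"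
            by (intro mult_left_mono) auto
          also have "\<dots> = c * u^2" unfolding c_def by (simp add: power_mult_distrib)
          finally have "V powr (p - 2) * (\<beta> * norm y)^2 \<le> c * u^2" .
          then show ?thesis unfolding r_def using p0 by (intro powr_mono2) auto
        qed
        finally show "x \<in> Cs" using b x by (simp add: Cs_def)
      qed
      have Bu_sets: "Bu \<in> sets (completion (distr M borel X))"
      proof (rule ccontr)
        assume "Bu \<notin> sets (completion (distr M borel X))"
        then have "measure (completion (distr M borel X)) Bu = 0" by (rule measure_notin_sets)
        moreover have "exp (-u) < 1" using u by simp
        ultimately show False using conc_u by simp
      qed
      have emC: "emeasure (completion (distr M borel X)) Cs = emeasure M (X -` Cs \<inter> space M)"
        using Cs by (simp add: emeasure_distr)
      have Cs_f: "Cs \<in> fmeasurable (completion (distr M borel X))"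
        unfolding fmeasurable_def using Cs emC by (simp add: less_top[symmetric])
      have "1 - exp (-u) \<le> measure (completion (distr M borel X)) Bu" using conc_u .
      also have "\<dots> \<le> measure (completion (distr M borel X)) Cs"
        by (rule measure_mono_fmeasurable[OF sub Bu_sets Cs_f])
      also have "\<dots> = measure (distr M borel X) Cs" using Cs by simp
      also have "\<dots> = measure M (X -` Cs \<inter> space M)" using Cs by (simp add: measure_distr)
      also have "X -` Cs \<inter> space M = {\<omega>\<in>space M. F (X \<omega>) < A0 + r u}" by (auto simp: Cs_def)
      finally have 1: "1 - exp (-u) \<le> prob {\<omega>\<in>space M. F (X \<omega>) < A0 + r u}" .
      have "{\<omega>\<in>space M. W \<omega> > r u} \<subseteq> space M - {\<omega>\<in>space M. F (X \<omega>) < A0 + r u}"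
        using r0[of u] by (auto simp: W_def)
      then have "prob {\<omega>\<in>space M. W \<omega> > r u} \<le> prob (space M - {\<omega>\<in>space M. F (X \<omega>) < A0 + r u})"
        by (intro finite_measure_mono) measurable
      also have "\<dots> = 1 - prob {\<omega>\<in>space M. F (X \<omega>) < A0 + r u}" by (rule prob_compl) measurable
      finally show ?thesis using 1 by linarith
    qed

    have EW: "expectation (\<lambda>\<omega>. W \<omega> powr p) \<le> 2 * c"
    proof (cases "c > 0")
      case True
      show ?thesis
        by (rule tail_moment[OF prob_space_axioms Wm W0 Wb True p0(1)]) (use tail in \<open>simp add: r_def\<close>)
    next
      case False
      then have c00: "c = 0" using c0 by simp
      have le: "expectation (\<lambda>\<omega>. W \<omega> powr p) \<le> 2 * c'" if c': "c' > 0" for c'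
      proof (rule tail_moment[OF prob_space_axioms Wm W0 Wb c' p0(1)])
        fix u :: real assume u: "u > 0"
        have "{\<omega>\<in>space M. W \<omega> > (c' * u^2) powr (1/p)} \<subseteq> {\<omega>\<in>space M. W \<omega> > r u}"
        proof safe
          fix \<omega> assume "(c' * u^2) powr (1/p) < W \<omega>"
          moreover have "(c' * u^2) powr (1/p) \<ge> 0" by simp
          moreover have "r u = 0" using c00 by (simp add: r_def)
          ultimately show "r u < W \<omega>" by linarith
        qed
        then have "prob {\<omega>\<in>space M. W \<omega> > (c' * u^2) powr (1/p)} \<le> prob {\<omega>\<in>space M. W \<omega> > r u}"
          by (intro finite_measure_mono) measurable
        then show "prob {\<omega>\<in>space M. W \<omega> > (c' * u^2) powr (1/p)} \<le> exp (- u)"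
          using tail[OF u] by linarith
      qed
      show ?thesis
      proof (rule ccontr)
        assume "\<not> ?thesis"
        then have pos: "expectation (\<lambda>\<omega>. W \<omega> powr p) > 0" using c00 by simp
        have "expectation (\<lambda>\<omega>. W \<omega> powr p) \<le> 2 * (expectation (\<lambda>\<omega>. W \<omega> powr p) / 4)"
          using pos by (intro le) simp
        then show False using pos by simp
      qed
    qed

    have iW: "integrable M (\<lambda>\<omega>. W \<omega> powr p)"
    proof (rule integrable_const_bound[where B="Smax powr p"])
      show "AE \<omega> in M. norm (W \<omega> powr p) \<le> Smax powr p"
        using W0 Wb p0 by (intro AE_I2) (auto intro: powr_mono2)
    qed measurable
    have iAW: "integrable M (\<lambda>\<omega>. (A0 + W \<omega>) powr p)"
    proof (rule integrable_const_bound[where B="(A0 + Smax) powr p"])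
      show "AE \<omega> in M. norm ((A0 + W \<omega>) powr p) \<le> (A0 + Smax) powr p"
      proof (rule AE_I2)
        fix \<omega>
        have "(A0 + W \<omega>) powr p \<le> (A0 + Smax) powr p"
          using W0[of \<omega>] Wb[of \<omega>] p0 A0 by (intro powr_mono2) auto
        then show "norm ((A0 + W \<omega>) powr p) \<le> (A0 + Smax) powr p" by simp
      qed
    qed measurable
    have iG: "integrable M (\<lambda>\<omega>. G (X \<omega>))"
    proof (rule integrable_const_bound[where B="real (card T) * V powr p"])
      show "AE \<omega> in M. norm (G (X \<omega>)) \<le> real (card T) * V powr p"
        using G0 Gb by (intro AE_I2) auto
    qed measurable
    have "expectation (\<lambda>\<omega>. G (X \<omega>)) \<le> expectation (\<lambda>\<omega>. (A0 + W \<omega>) powr p)"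
    proof (rule integral_mono[OF iG iAW])
      fix \<omega>
      have "G (X \<omega>) = F (X \<omega>) powr p" by (simp add: FG)
      also have "\<dots> \<le> (A0 + W \<omega>) powr p" using SW[of \<omega>] F0 p0 by (intro powr_mono2) auto
      finally show "G (X \<omega>) \<le> (A0 + W \<omega>) powr p" .
    qed
    also have "\<dots> \<le> (A0 + w0) powr p"
    proof (rule mink_exp[OF prob_space_axioms p0(2) _ w00 W0 iW iAW])
      show "A0 \<ge> 0" using A0 by simp
      have "w0 powr p = 2 * c" unfolding w0_def using c0 p0 by (simp add: powr_powr)
      then show "expectation (\<lambda>\<omega>. W \<omega> powr p) \<le> w0 powr p" using EW by simp
    qed
    finally show ?thesis by (simp add: A0_def algebra_simps)
  qed

  have 1: "expectation (\<lambda>\<omega>. G (X \<omega>)) \<le> (2 * E0 + w0) powr p"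
    by (rule eps_powr_le) (use key E00 w00 p0 in auto)
  have 2: "expectation (\<lambda>\<omega>. G (X \<omega>)) powr (1/p) \<le> 2 * E0 + w0"
  proof -
    have "expectation (\<lambda>\<omega>. G (X \<omega>)) powr (1/p) \<le> ((2 * E0 + w0) powr p) powr (1/p)"
      using 1 p0 G0 by (intro powr_mono2 integral_nonneg_AE) auto
    also have "\<dots> = 2 * E0 + w0" using E00 w00 p0 by (simp add: powr_powr)
    finally show ?thesis .
  qed
  have 3: "w0 = 2 powr (1/p) * V powr ((p - 2) / p) * (\<alpha> * \<beta>) powr (2/p)"
  proof -
    have ab: "\<alpha> * \<beta> \<ge> 0" using \<alpha>0 \<beta>0 by simp
    have "w0 = 2 powr (1/p) * ((V powr (p - 2)) powr (1/p) * ((\<alpha> * \<beta>)^2) powr (1/p))"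
      unfolding w0_def c_def by (simp add: powr_mult)
    also have "(V powr (p - 2)) powr (1/p) = V powr ((p - 2) / p)" by (simp add: powr_powr)
    also have "((\<alpha> * \<beta>)^2) powr (1/p) = (\<alpha> * \<beta>) powr (2/p)"
    proof (cases "\<alpha> * \<beta> = 0")
      case True then show ?thesis by (simp only: True) simp
    next
      case False
      then have "\<alpha> * \<beta> > 0" using ab by linarith
      then have "(\<alpha> * \<beta>)^2 = (\<alpha> * \<beta>) powr 2" by (simp add: powr_numeral)
      then show ?thesis by (simp add: powr_powr)
    qed
    finally show ?thesis by simp
  qed
  show ?thesis using 2 unfolding 3 G_def F_def E0_def \<beta>_def by simp
qed

end
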